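(* Let $n\ge 6$ and let $CB_n$ be the set of chemical bicyclic graphs on $n$ vertices. Define the following subsets of $CB_n$ (in each, all $m_{i,j}$ not listed are $0$): $\beta_2$: $n_4=0,n_3=2,n_2=n-2,n_1=0$, $m_{2,3}=4$, $m_{3,3}=1$, $m_{2,2}=n-4$; $\beta_3$: $n_4=0,n_3=2,n_2=n-2,n_1=0$, $m_{2,3}=6$, $m_{2,2}=n-5$; $\beta_9$: $n_4=0,n_3=3,n_2=n-4,n_1=1$, $m_{1,2}=1$, $m_{2,3}=3$, $m_{3,3}=3$, $m_{2,2}=n-6$. Let $G_1\in\beta_2$, $G_2\in\beta_3$, $G_3\in\beta_9$, and let $G\in CB_n$ not belong to $\beta_2\cup\beta_3\cup\beta_9$. Then $SO(G_1)<SO(G_2)<SO(G_3)<SO(G)$.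
   Context: All graphs are simple and connected. A chemical graph is a graph with maximum degree at most $4$; a bicyclic graph is a connected graph with $n$ vertices and $n+1$ edges. $d_G(u)$ is the degree of $u$, $n_i$ the number of vertices of degree $i$, and $m_{i,j}$ the number of edges joining a vertex of degree $i$ to a vertex of degree $j$. The Sombor index is $SO(G)=\sum_{uv\in E(G)}\sqrt{d_G(u)^2+d_G(v)^2}$. *)

theory Defs
  imports Complex_Main
begin

definition simple_graph :: "'a set \<Rightarrow> 'a set set \<Rightarrow> bool" where
  "simple_graph V E \<longleftrightarrow> finite V \<and>
     (\<forall>e\<in>E. \<exists>u v. e = {u, v} \<and> u \<noteq> v \<and> u \<in> V \<and> v \<in> V)"

definition degree :: "'a set set \<Rightarrow> 'a \<Rightarrow> nat" where
  "degree E v = card {e \<in> E. v \<in> e}"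

definition adjacent :: "'a set set \<Rightarrow> 'a \<Rightarrow> 'a \<Rightarrow> bool" where
  "adjacent E u v \<longleftrightarrow> {u, v} \<in> E"

definition connected_graph :: "'a set \<Rightarrow> 'a set set \<Rightarrow> bool" where
  "connected_graph V E \<longleftrightarrow> V \<noteq> {} \<and> (\<forall>u\<in>V. \<forall>v\<in>V. (adjacent E)\<^sup>*\<^sup>* u v)"

text \<open>Chemical: maximum degree at most 4. Bicyclic: connected with |E| = |V| + 1.\<close>

definition chemical_bicyclic :: "nat \<Rightarrow> 'a set \<Rightarrow> 'a set set \<Rightarrow> bool" where
  "chemical_bicyclic n V E \<longleftrightarrow> simple_graph V E \<and> connected_graph V E \<and>
     card V = n \<and> card E = n + 1 \<and> (\<forall>v\<in>V. degree E v \<le> 4)"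

definition nv :: "'a set \<Rightarrow> 'a set set \<Rightarrow> nat \<Rightarrow> nat" where
  "nv V E i = card {v \<in> V. degree E v = i}"

definition me :: "'a set set \<Rightarrow> nat \<Rightarrow> nat \<Rightarrow> nat" where
  "me E i j = card {e \<in> E. \<exists>u v. e = {u, v} \<and> u \<noteq> v \<and> degree E u = i \<and> degree E v = j}"

text \<open>Sombor index: for an edge e = {u,v}, sqrt(d(u)^2 + d(v)^2) = sqrt of the sum over x in e.\<close>
definition sombor :: "'a set set \<Rightarrow> real" where
  "sombor E = (\<Sum>e\<in>E. sqrt (\<Sum>x\<in>e. (real (degree E x))\<^sup>2))"

text \<open>Only m_{i,j} with 1 \<le> i \<le> j \<le> 4 are relevant (chemical graphs, connected, n \<ge> 6).\<close>
definition m_profile :: "'a set set \<Rightarrow> (nat \<times> nat \<Rightarrow> nat) \<Rightarrow> bool" where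
  "m_profile E f \<longleftrightarrow> (\<forall>i j. 1 \<le> i \<longrightarrow> i \<le> j \<longrightarrow> j \<le> 4 \<longrightarrow> me E i j = f (i, j))"

definition beta2 :: "nat \<Rightarrow> 'a set \<Rightarrow> 'a set set \<Rightarrow> bool" where
  "beta2 n V E \<longleftrightarrow> chemical_bicyclic n V E \<and>
     nv V E 4 = 0 \<and> nv V E 3 = 2 \<and> nv V E 2 = n - 2 \<and> nv V E 1 = 0 \<and>
     m_profile E (\<lambda>p. if p = (2,3) then 4 else if p = (3,3) then 1
                       else if p = (2,2) then n - 4 else 0)"

definition beta3 :: "nat \<Rightarrow> 'a set \<Rightarrow> 'a set set \<Rightarrow> bool" where
  "beta3 n V E \<longleftrightarrow> chemical_bicyclic n V E \<and>
     nv V E 4 = 0 \<and> nv V E 3 = 2 \<and> nv V E 2 = n - 2 \<and> nv V E 1 = 0 \<and>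
     m_profile E (\<lambda>p. if p = (2,3) then 6 else if p = (2,2) then n - 5 else 0)"

definition beta9 :: "nat \<Rightarrow> 'a set \<Rightarrow> 'a set set \<Rightarrow> bool" where
  "beta9 n V E \<longleftrightarrow> chemical_bicyclic n V E \<and>
     nv V E 4 = 0 \<and> nv V E 3 = 3 \<and> nv V E 2 = n - 4 \<and> nv V E 1 = 1 \<and>
     m_profile E (\<lambda>p. if p = (1,2) then 1 else if p = (2,3) then 3
                       else if p = (3,3) then 3 else if p = (2,2) then n - 6 else 0)"

end

theory Submission
  imports Defs
begin


lemma sqrt_lt_b: "0 \<le> b \<Longrightarrow> a < b^2 \<Longrightarrow> sqrt a < b"
  by (metis real_sqrt_abs real_sqrt_less_iff abs_of_nonneg)
lemma sqrt_gt_b: "0 \<le> b \<Longrightarrow> b^2 < a \<Longrightarrow> b < sqrt a"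
  by (rule real_less_rsqrt)

lemma sg_finE: assumes "simple_graph V E" shows "finite E"
proof -
  have "E \<subseteq> Pow V" "finite V" using assms by (auto simp: simple_graph_def)
  thus ?thesis by (meson finite_Pow_iff finite_subset)
qed

lemma sg_sub: "simple_graph V E \<Longrightarrow> e \<in> E \<Longrightarrow> e \<subseteq> V"
  by (auto simp: simple_graph_def)

lemma deg_ge1: assumes "simple_graph V E" "e \<in> E" "x \<in> e" shows "degree E x \<ge> 1"
proof -
  have "finite {e\<in>E. x \<in> e}" using sg_finE[OF assms(1)] by simp
  moreover have "{e\<in>E. x \<in> e} \<noteq> {}" using assms by auto
  ultimately show ?thesis unfolding degree_def by (simp add: Suc_le_eq card_gt_0_iff)
qed

lemma closed_reach:
  "(adjacent E)\<^sup>*\<^sup>* u w \<Longrightarrow> u \<in> S \<Longrightarrow> (\<forall>x y. x \<in> S \<longrightarrow> {x,y} \<in> E \<longrightarrow> y \<in> S) \<Longrightarrow> w \<in> S"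
  by (induction rule: rtranclp_induct) (auto simp: adjacent_def)

lemma deg_pos_conn:
  assumes sg: "simple_graph V E" and c: "connected_graph V E" and cV: "2 \<le> card V" and v: "v \<in> V"
  shows "degree E v \<ge> 1"
proof (rule ccontr)
  assume "\<not> 1 \<le> degree E v"
  hence "card {e\<in>E. v \<in> e} = 0" unfolding degree_def by simp
  hence none: "\<forall>e\<in>E. v \<notin> e" using sg_finE[OF sg] by auto
  have "\<exists>w\<in>V. w \<noteq> v"
  proof (rule ccontr)
    assume "\<not> ?thesis" hence "V \<subseteq> {v}" by auto
    hence "card V \<le> card {v}" by (intro card_mono) auto
    thus False using cV by simp
  qed
  then obtain w where w: "w \<in> V" "w \<noteq> v" by blast
  have "(adjacent E)\<^sup>*\<^sup>* v w" using c v w unfolding connected_graph_def by blast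
  hence "w \<in> {v}" by (rule closed_reach) (use none in auto)
  thus False using w by simp
qed

lemma deg1_only: assumes sg: "simple_graph V E" and e: "{u,v} \<in> E" and d: "degree E u = 1"
  shows "\<forall>e\<in>E. u \<in> e \<longrightarrow> e = {u,v}"
proof -
  have "card {e\<in>E. u \<in> e} = 1" using d unfolding degree_def .
  then obtain a where a: "{e\<in>E. u \<in> e} = {a}" by (rule card_1_singletonE)
  have "{u,v} \<in> {e\<in>E. u \<in> e}" using e by simp
  hence "a = {u,v}" using a by simp
  thus ?thesis using a by blast
qed

lemma no_11:
  assumes sg: "simple_graph V E" and c: "connected_graph V E" and cV: "3 \<le> card V"
    and e: "{u,v} \<in> E" and uv: "u \<noteq> v" and du: "degree E u = 1" and dv: "degree E v = 1"
  shows False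
proof -
  have ou: "\<forall>e\<in>E. u \<in> e \<longrightarrow> e = {u,v}" using deg1_only[OF sg e du] .
  have e': "{v,u} \<in> E" using e by (simp add: insert_commute)
  have ov: "\<forall>e\<in>E. v \<in> e \<longrightarrow> e = {v,u}" using deg1_only[OF sg e' dv] .
  have c2: "card {u,v} = 2" using uv by simp
  have "\<exists>w\<in>V. w \<notin> {u,v}"
  proof (rule ccontr)
    assume "\<not> ?thesis" hence "V \<subseteq> {u,v}" by blast
    hence "card V \<le> card {u,v}" by (intro card_mono) simp_all
    thus False using cV c2 by linarith
  qed
  then obtain w where w: "w \<in> V" "w \<notin> {u,v}" by blast
  have uV: "u \<in> V" using sg_sub[OF sg e] by simp
  have cl: "\<forall>x y. x \<in> {u,v} \<longrightarrow> {x,y} \<in> E \<longrightarrow> y \<in> {u,v}"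
  proof (intro allI impI)
    fix x y assume x: "x \<in> {u,v}" and xy: "{x,y} \<in> E"
    have yin: "y \<in> {x,y}" by simp
    show "y \<in> {u,v}"
    proof (cases "x = u")
      case True
      hence "{x,y} = {u,v}" using ou xy by simp
      thus ?thesis using yin by simp
    next
      case False
      hence "x = v" using x by simp
      hence "{x,y} = {v,u}" using ov xy by simp
      thus ?thesis using yin by auto
    qed
  qed
  have r: "(adjacent E)\<^sup>*\<^sup>* u w" using c uV w(1) unfolding connected_graph_def by simp
  have "w \<in> {u,v}" using closed_reach[OF r _ cl] by simp
  thus False using w by simp
qed



lemma dc: assumes sg: "simple_graph V E"
  shows "(\<Sum>e\<in>E. \<Sum>x\<in>e. h x) = (\<Sum>v\<in>V. real (degree E v) * h v)"
proof -
  have fV: "finite V" using sg by (simp add: simple_graph_def)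
  have "(\<Sum>e\<in>E. \<Sum>x\<in>e. h x) = (\<Sum>e\<in>E. \<Sum>v\<in>V. if v \<in> e then h v else 0)"
  proof (rule sum.cong)
    fix e assume "e \<in> E"
    hence "{v\<in>V. v \<in> e} = e" using sg_sub[OF sg] by auto
    thus "(\<Sum>x\<in>e. h x) = (\<Sum>v\<in>V. if v \<in> e then h v else 0)"
      using sum.inter_filter[OF fV, of h "\<lambda>v. v \<in> e"] by simp
  qed simp
  also have "\<dots> = (\<Sum>v\<in>V. \<Sum>e\<in>E. if v \<in> e then h v else 0)" by (rule sum.swap)
  also have "\<dots> = (\<Sum>v\<in>V. real (degree E v) * h v)"
  proof (rule sum.cong)
    fix v assume "v \<in> V"
    have "(\<Sum>e\<in>E. if v \<in> e then h v else 0) = (\<Sum>e\<in>{e\<in>E. v \<in> e}. h v)"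
      using sum.inter_filter[OF sg_finE[OF sg], of "\<lambda>_. h v" "\<lambda>e. v \<in> e"] by simp
    thus "(\<Sum>e\<in>E. if v \<in> e then h v else 0) = real (degree E v) * h v"
      by (simp add: degree_def)
  qed simp
  finally show ?thesis .
qed



definition cls :: "'a set set \<Rightarrow> nat \<Rightarrow> nat \<Rightarrow> 'a set set" where
  "cls E i j = {e \<in> E. \<exists>u v. e = {u, v} \<and> u \<noteq> v \<and> degree E u = i \<and> degree E v = j}"

lemma me_cls: "me E i j = card (cls E i j)" by (simp add: me_def cls_def)

definition P10 :: "(nat \<times> nat) set" where
  "P10 = {(1,1),(1,2),(1,3),(1,4),(2,2),(2,3),(2,4),(3,3),(3,4),(4,4)}"

lemma P10_mem: "1 \<le> a \<Longrightarrow> a \<le> b \<Longrightarrow> b \<le> (4::nat) \<Longrightarrow> (a,b) \<in> P10"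
proof -
  assume "1 \<le> a" "a \<le> b" "b \<le> 4"
  hence "a = 1 \<or> a = 2 \<or> a = 3 \<or> a = 4" "b = 1 \<or> b = 2 \<or> b = 3 \<or> b = 4" by auto
  thus ?thesis using \<open>a \<le> b\<close> unfolding P10_def by auto
qed

lemma P10_le: "p \<in> P10 \<Longrightarrow> fst p \<le> snd p" by (auto simp: P10_def)

lemma sum_P10: "(\<Sum>p\<in>P10. f p) = f (1,1) + f (1,2) + f (1,3) + f (1,4) + f (2,2) + f (2,3) + f (2,4) + f (3,3) + f (3,4) + f (4,4)"
  by (simp add: P10_def add.assoc)

lemma class_sum:
  fixes Q :: "'a set \<Rightarrow> real"
  assumes sg: "simple_graph V E" and ch: "\<forall>v\<in>V. degree E v \<le> 4"
   and Q: "\<And>e u v. e \<in> E \<Longrightarrow> e = {u,v} \<Longrightarrow> u \<noteq> v \<Longrightarrow> Q e = q (degree E u) (degree E v)"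
  shows "(\<Sum>e\<in>E. Q e) = (\<Sum>p\<in>P10. real (me E (fst p) (snd p)) * q (fst p) (snd p))"
proof -
  have fE: "finite E" by (rule sg_finE[OF sg])
  have E_eq: "E = (\<Union>p\<in>P10. cls E (fst p) (snd p))"
  proof
    show "(\<Union>p\<in>P10. cls E (fst p) (snd p)) \<subseteq> E" by (auto simp: cls_def)
  next
    show "E \<subseteq> (\<Union>p\<in>P10. cls E (fst p) (snd p))"
    proof
      fix e assume e: "e \<in> E"
      then obtain u v where uv: "e = {u,v}" "u \<noteq> v" "u \<in> V" "v \<in> V"
        using sg unfolding simple_graph_def by blast
      have du: "1 \<le> degree E u" "degree E u \<le> 4" using deg_ge1[OF sg e] uv ch by auto
      have dv: "1 \<le> degree E v" "degree E v \<le> 4" using deg_ge1[OF sg e] uv ch by auto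
      show "e \<in> (\<Union>p\<in>P10. cls E (fst p) (snd p))"
      proof (cases "degree E u \<le> degree E v")
        case True
        hence "(degree E u, degree E v) \<in> P10" using du dv by (intro P10_mem) auto
        moreover have "e \<in> cls E (degree E u) (degree E v)" using e uv unfolding cls_def by blast
        ultimately show ?thesis by force
      next
        case False
        hence "(degree E v, degree E u) \<in> P10" using du dv by (intro P10_mem) auto
        moreover have "e = {v,u}" using uv by (simp add: insert_commute)
        hence "e \<in> cls E (degree E v) (degree E u)" using e uv unfolding cls_def by blast
        ultimately show ?thesis by force
      qed
    qed
  qed
  have disj: "\<forall>p\<in>P10. \<forall>p'\<in>P10. p \<noteq> p' \<longrightarrow> cls E (fst p) (snd p) \<inter> cls E (fst p') (snd p') = {}"
  proof (intro ballI impI)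
    fix p p' assume p: "p \<in> P10" and p': "p' \<in> P10" and ne: "p \<noteq> p'"
    show "cls E (fst p) (snd p) \<inter> cls E (fst p') (snd p') = {}"
    proof (rule ccontr)
      assume "\<not> ?thesis"
      then obtain e where "e \<in> cls E (fst p) (snd p)" "e \<in> cls E (fst p') (snd p')" by blast
      then obtain u v u' v' where A: "e = {u,v}" "u \<noteq> v" "degree E u = fst p" "degree E v = snd p"
        and B: "e = {u',v'}" "degree E u' = fst p'" "degree E v' = snd p'"
        unfolding cls_def by blast
      have "(u = u' \<and> v = v') \<or> (u = v' \<and> v = u')" using A B by (metis doubleton_eq_iff)
      thus False using A B P10_le[OF p] P10_le[OF p'] ne by (cases p, cases p') auto
    qed
  qed
  have "(\<Sum>e\<in>E. Q e) = (\<Sum>p\<in>P10. \<Sum>e\<in>cls E (fst p) (snd p). Q e)"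
    apply (subst E_eq)
    apply (rule sum.UNION_disjoint)
    using fE disj by (auto simp: P10_def cls_def)
  also have "\<dots> = (\<Sum>p\<in>P10. real (me E (fst p) (snd p)) * q (fst p) (snd p))"
  proof (rule sum.cong)
    fix p assume "p \<in> P10"
    have "(\<Sum>e\<in>cls E (fst p) (snd p). Q e) = (\<Sum>e\<in>cls E (fst p) (snd p). q (fst p) (snd p))"
    proof (rule sum.cong)
      fix e assume "e \<in> cls E (fst p) (snd p)"
      then obtain u v where "e \<in> E" "e = {u,v}" "u \<noteq> v" "degree E u = fst p" "degree E v = snd p"
        unfolding cls_def by blast
      thus "Q e = q (fst p) (snd p)" using Q by metis
    qed simp
    thus "(\<Sum>e\<in>cls E (fst p) (snd p). Q e) = real (me E (fst p) (snd p)) * q (fst p) (snd p)"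
      by (simp add: me_cls)
  qed simp
  finally show ?thesis .
qed

lemma mkk_bound: assumes sg: "simple_graph V E"
  shows "me E k k \<le> nv V E k choose 2"
proof -
  have fV: "finite V" using sg by (simp add: simple_graph_def)
  have "cls E k k \<subseteq> {B. B \<subseteq> {v\<in>V. degree E v = k} \<and> card B = 2}"
  proof
    fix e assume "e \<in> cls E k k"
    then obtain u v where "e \<in> E" "e = {u,v}" "u \<noteq> v" "degree E u = k" "degree E v = k"
      unfolding cls_def by blast
    moreover have "e \<subseteq> V" using sg_sub[OF sg \<open>e \<in> E\<close>] .
    ultimately show "e \<in> {B. B \<subseteq> {v\<in>V. degree E v = k} \<and> card B = 2}" by auto
  qed
  hence "card (cls E k k) \<le> card {B. B \<subseteq> {v\<in>V. degree E v = k} \<and> card B = 2}"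
    by (rule card_mono[rotated]) (simp add: fV)
  also have "\<dots> = nv V E k choose 2" by (subst n_subsets) (simp_all add: fV nv_def)
  finally show ?thesis by (simp add: me_cls)
qed



lemma ind_sum: assumes "finite V"
  shows "(\<Sum>v\<in>V. if degree E v = k then (1::real) else 0) = real (nv V E k)"
  using sum.inter_filter[OF assms, of "\<lambda>_. (1::real)" "\<lambda>v. degree E v = k"]
  by (simp add: nv_def)

lemma profile:
  assumes cb: "chemical_bicyclic n V E" and n6: "n \<ge> 6"
  shows "sombor E = (\<Sum>p\<in>P10. real (me E (fst p) (snd p)) * sqrt (real (fst p)^2 + real (snd p)^2))"
    and "real n + 1 = (\<Sum>p\<in>P10. real (me E (fst p) (snd p)))"
    and "real n = real (nv V E 1) + real (nv V E 2) + real (nv V E 3) + real (nv V E 4)"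
    and "real k * real (nv V E k) = (\<Sum>p\<in>P10. real (me E (fst p) (snd p)) *
            ((if fst p = k then 1 else 0) + (if snd p = k then 1 else 0)))"
    and "me E 1 1 = 0"
    and "me E k k \<le> nv V E k choose 2"
proof -
  have sg: "simple_graph V E" and c: "connected_graph V E" and cV: "card V = n"
    and cE: "card E = n + 1" and ch: "\<forall>v\<in>V. degree E v \<le> 4"
    using cb by (auto simp: chemical_bicyclic_def)
  have fV: "finite V" using sg by (simp add: simple_graph_def)
  show "sombor E = (\<Sum>p\<in>P10. real (me E (fst p) (snd p)) * sqrt (real (fst p)^2 + real (snd p)^2))"
    unfolding sombor_def
    by (rule class_sum[OF sg ch, where q = "\<lambda>i j. sqrt (real i^2 + real j^2)"]) simp
  have "(\<Sum>e\<in>E. (1::real)) = (\<Sum>p\<in>P10. real (me E (fst p) (snd p)) * 1)"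
    by (rule class_sum[OF sg ch, where q = "\<lambda>i j. 1"]) simp
  thus "real n + 1 = (\<Sum>p\<in>P10. real (me E (fst p) (snd p)))" using cE by simp
  have "(\<Sum>e\<in>E. \<Sum>x\<in>e. if degree E x = k then (1::real) else 0)
        = (\<Sum>p\<in>P10. real (me E (fst p) (snd p)) *
            ((if fst p = k then 1 else 0) + (if snd p = k then 1 else 0)))"
    by (rule class_sum[OF sg ch]) simp
  moreover have "(\<Sum>e\<in>E. \<Sum>x\<in>e. if degree E x = k then (1::real) else 0)
      = (\<Sum>v\<in>V. real (degree E v) * (if degree E v = k then 1 else 0))"
    by (rule dc[OF sg])
  moreover have "(\<Sum>v\<in>V. real (degree E v) * (if degree E v = k then 1 else 0))
      = (\<Sum>v\<in>V. real k * (if degree E v = k then 1 else 0))"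
    by (rule sum.cong) auto
  ultimately show "real k * real (nv V E k) = (\<Sum>p\<in>P10. real (me E (fst p) (snd p)) *
            ((if fst p = k then 1 else 0) + (if snd p = k then 1 else 0)))"
    by (simp add: ind_sum[OF fV] sum_distrib_left[symmetric])
  have deg: "\<forall>v\<in>V. 1 \<le> degree E v \<and> degree E v \<le> 4"
    using deg_pos_conn[OF sg c] cV n6 ch by auto
  have "real n = (\<Sum>v\<in>V. (1::real))" using cV by simp
  also have "\<dots> = (\<Sum>v\<in>V. (if degree E v = 1 then 1 else 0) + (if degree E v = 2 then 1 else 0)
       + (if degree E v = 3 then 1 else 0) + (if degree E v = 4 then (1::real) else 0))"
  proof (rule sum.cong)
    fix v assume "v \<in> V"
    hence "degree E v = 1 \<or> degree E v = 2 \<or> degree E v = 3 \<or> degree E v = 4" using deg by fastforce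
    thus "1 = (if degree E v = 1 then 1 else 0) + (if degree E v = 2 then 1 else 0)
       + (if degree E v = 3 then 1 else 0) + (if degree E v = 4 then (1::real) else 0)" by auto
  qed simp
  also have "\<dots> = real (nv V E 1) + real (nv V E 2) + real (nv V E 3) + real (nv V E 4)"
    by (simp add: sum.distrib ind_sum[OF fV])
  finally show "real n = real (nv V E 1) + real (nv V E 2) + real (nv V E 3) + real (nv V E 4)" .
  have "cls E 1 1 = {}"
  proof (rule ccontr)
    assume "cls E 1 1 \<noteq> {}"
    then obtain e u v where "e \<in> E" "e = {u,v}" "u \<noteq> v" "degree E u = 1" "degree E v = 1"
      unfolding cls_def by blast
    thus False using no_11[OF sg c, of u v] cV n6 by auto
  qed
  thus "me E 1 1 = 0" by (simp add: me_cls)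
  show "me E k k \<le> nv V E k choose 2" by (rule mkk_bound[OF sg])
qed



lemma mprof_get: "m_profile E f \<Longrightarrow> 1 \<le> i \<Longrightarrow> i \<le> j \<Longrightarrow> j \<le> 4 \<Longrightarrow> me E i j = f (i,j)"
  by (simp add: m_profile_def)

lemma mprof_intro: "(\<forall>p\<in>P10. me E (fst p) (snd p) = f p) \<Longrightarrow> m_profile E f"
  unfolding m_profile_def using P10_mem by fastforce

lemma sq8: "sqrt 8 = 2 * sqrt 2" by (metis mult.commute num_double numeral_times_numeral real_sqrt_four real_sqrt_mult)
lemma sqm: "0 \<le> (a::real) \<Longrightarrow> sqrt (a^2 * b) = a * sqrt b" by (simp add: real_sqrt_mult)
lemma sq18: "sqrt 18 = 3 * sqrt 2" using sqm[of 3 2] by simp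
lemma sq32: "sqrt 32 = 4 * sqrt 2" using sqm[of 4 2] by simp
lemma sq20: "sqrt 20 = 2 * sqrt 5" using sqm[of 2 5] by simp
lemma sq25: "sqrt 25 = 5"
proof - have "sqrt 25 = sqrt (5^2)" by simp also have "\<dots> = 5" by simp finally show ?thesis . qed

lemma so_expand:
  assumes cb: "chemical_bicyclic n V E" and n6: "n \<ge> 6"
  shows "sombor E = real (me E 1 1) * sqrt 2 + real (me E 1 2) * sqrt 5 + real (me E 1 3) * sqrt 10
    + real (me E 1 4) * sqrt 17 + real (me E 2 2) * (2 * sqrt 2) + real (me E 2 3) * sqrt 13
    + real (me E 2 4) * (2 * sqrt 5) + real (me E 3 3) * (3 * sqrt 2) + real (me E 3 4) * 5
    + real (me E 4 4) * (4 * sqrt 2)"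
  using profile(1)[OF cb n6] by (simp add: sum_P10 sq8 sq18 sq32 sq20 sq25)

lemma beta2_SO: assumes b: "beta2 n V E" and n6: "n \<ge> 6"
  shows "sombor E = 4 * sqrt 13 + 3 * sqrt 2 + 2 * sqrt 2 * (real n - 4)"
proof -
  have cb: "chemical_bicyclic n V E" and mp: "m_profile E (\<lambda>p. if p = (2,3) then 4 else if p = (3,3) then 1
                       else if p = (2,2) then n - 4 else 0)" using b by (auto simp: beta2_def)
  show ?thesis using so_expand[OF cb n6] n6
    by (simp add: mprof_get[OF mp] of_nat_diff algebra_simps)
qed

lemma beta3_SO: assumes b: "beta3 n V E" and n6: "n \<ge> 6"
  shows "sombor E = 6 * sqrt 13 + 2 * sqrt 2 * (real n - 5)"
proof -
  have cb: "chemical_bicyclic n V E" and mp: "m_profile E (\<lambda>p. if p = (2,3) then 6 else if p = (2,2) then n - 5 else 0)"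
    using b by (auto simp: beta3_def)
  show ?thesis using so_expand[OF cb n6] n6
    by (simp add: mprof_get[OF mp] of_nat_diff algebra_simps)
qed

lemma beta9_SO: assumes b: "beta9 n V E" and n6: "n \<ge> 6"
  shows "sombor E = sqrt 5 + 3 * sqrt 13 + 9 * sqrt 2 + 2 * sqrt 2 * (real n - 6)"
proof -
  have cb: "chemical_bicyclic n V E" and mp: "m_profile E (\<lambda>p. if p = (1,2) then 1 else if p = (2,3) then 3
                       else if p = (3,3) then 3 else if p = (2,2) then n - 6 else 0)"
    using b by (auto simp: beta9_def)
  show ?thesis using so_expand[OF cb n6] n6
    by (simp add: mprof_get[OF mp] of_nat_diff algebra_simps)
qed

lemma s2b: "(141421/100000) < sqrt 2" "sqrt 2 < (141422/100000)"
  by (rule sqrt_gt_b, simp, simp add: power2_eq_square) (rule sqrt_lt_b, simp, simp add: power2_eq_square)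
lemma s5b: "(223606/100000) < sqrt 5" "sqrt 5 < (223607/100000)"
  by (rule sqrt_gt_b, simp, simp add: power2_eq_square) (rule sqrt_lt_b, simp, simp add: power2_eq_square)
lemma s10b: "(316227/100000) < sqrt 10"
  by (rule sqrt_gt_b, simp, simp add: power2_eq_square)
lemma s13b: "(360555/100000) < sqrt 13" "sqrt 13 < (360556/100000)"
  by (rule sqrt_gt_b, simp, simp add: power2_eq_square) (rule sqrt_lt_b, simp, simp add: power2_eq_square)
lemma s17b: "(412310/100000) < sqrt 17"
  by (rule sqrt_gt_b, simp, simp add: power2_eq_square)



lemma natr: "real x = real n - real c \<Longrightarrow> c \<le> n \<Longrightarrow> x = n - c"
  by (metis of_nat_diff of_nat_eq_iff)

lemma lower:
  assumes cb: "chemical_bicyclic n V E" and n6: "n \<ge> 6"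
    and nb2: "\<not> beta2 n V E" and nb3: "\<not> beta3 n V E" and nb9: "\<not> beta9 n V E"
  shows "sqrt 5 + 3 * sqrt 13 + 9 * sqrt 2 + 2 * sqrt 2 * (real n - 6) < sombor E"
proof -
  define a11 where "a11 = real (me E 1 1)"
  define a12 where "a12 = real (me E 1 2)"
  define a13 where "a13 = real (me E 1 3)"
  define a14 where "a14 = real (me E 1 4)"
  define a22 where "a22 = real (me E 2 2)"
  define a23 where "a23 = real (me E 2 3)"
  define a24 where "a24 = real (me E 2 4)"
  define a33 where "a33 = real (me E 3 3)"
  define a34 where "a34 = real (me E 3 4)"
  define a44 where "a44 = real (me E 4 4)"
  define N1 where "N1 = real (nv V E 1)"
  define N2 where "N2 = real (nv V E 2)"
  define N3 where "N3 = real (nv V E 3)"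
  define N4 where "N4 = real (nv V E 4)"
  note defs = a11_def a12_def a13_def a14_def a22_def a23_def a24_def a33_def a34_def a44_def
    N1_def N2_def N3_def N4_def
  have nn: "a12 \<ge> 0" "a13 \<ge> 0" "a14 \<ge> 0" "a22 \<ge> 0" "a23 \<ge> 0" "a24 \<ge> 0" "a33 \<ge> 0"
    "a34 \<ge> 0" "a44 \<ge> 0" "N1 \<ge> 0" "N2 \<ge> 0" "N3 \<ge> 0" "N4 \<ge> 0" by (simp_all add: defs)
  have m11s: "me E (Suc 0) (Suc 0) = 0" using profile(5)[OF cb n6] by simp
  have a11: "a11 = 0" using profile(5)[OF cb n6] by (simp add: a11_def)
  have T: "real n + 1 = a11 + a12 + a13 + a14 + a22 + a23 + a24 + a33 + a34 + a44"
    using profile(2)[OF cb n6] by (simp add: sum_P10 defs)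
  have Nn: "real n = N1 + N2 + N3 + N4" using profile(3)[OF cb n6] by (simp add: defs)
  have H1: "N1 = 2 * a11 + a12 + a13 + a14" using profile(4)[OF cb n6, of 1] by (simp add: sum_P10 defs)
  have H2: "2 * N2 = a12 + 2 * a22 + a23 + a24" using profile(4)[OF cb n6, of 2] by (simp add: sum_P10 defs)
  have H3: "3 * N3 = a13 + a23 + 2 * a33 + a34" using profile(4)[OF cb n6, of 3] by (simp add: sum_P10 defs)
  have H4: "4 * N4 = a14 + a24 + a34 + 2 * a44" using profile(4)[OF cb n6, of 4] by (simp add: sum_P10 defs)
  have SO: "sombor E = a11 * sqrt 2 + a12 * sqrt 5 + a13 * sqrt 10 + a14 * sqrt 17 + a22 * (2 * sqrt 2)
     + a23 * sqrt 13 + a24 * (2 * sqrt 5) + a33 * (3 * sqrt 2) + a34 * 5 + a44 * (4 * sqrt 2)"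
    using so_expand[OF cb n6] by (simp add: defs)
  define X12 where "X12 = a12 * (sqrt 5 - 2 * sqrt 2)"
  define X13 where "X13 = a13 * (sqrt 10 - 2 * sqrt 2)"
  define X14 where "X14 = a14 * (sqrt 17 - 2 * sqrt 2)"
  define X23 where "X23 = a23 * (sqrt 13 - 2 * sqrt 2)"
  define X24 where "X24 = a24 * (2 * sqrt 5 - 2 * sqrt 2)"
  define X33 where "X33 = a33 * sqrt 2"
  define X34 where "X34 = a34 * (5 - 2 * sqrt 2)"
  define X44 where "X44 = a44 * (2 * sqrt 2)"
  have key: "sombor E = 2 * sqrt 2 * (real n + 1) + X12 + X13 + X14 + X23 + X24 + X33 + X34 + X44"
    unfolding SO T X12_def X13_def X14_def X23_def X24_def X33_def X34_def X44_def a11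
    by (simp add: algebra_simps)
  have goal_red: "sqrt 5 + 3 * sqrt 13 + 9 * sqrt 2 + 2 * sqrt 2 * (real n - 6)
     = 2 * sqrt 2 * (real n + 1) + (sqrt 5 + 3 * sqrt 13 - 5 * sqrt 2)"
    by (simp add: algebra_simps)
  have ub: "sqrt 5 + 3 * sqrt 13 - 5 * sqrt 2 < (59817/10000)" using s5b s13b s2b by linarith
  have g12: "-(5924/10000) \<le> (sqrt 5 - 2 * sqrt 2)" using s5b s2b by linarith
  have L12: "X12 \<ge> -(5924/10000) * a12" using mult_left_mono[OF g12 nn(1)] unfolding X12_def by linarith
  have g13: "(3338/10000) \<le> (sqrt 10 - 2 * sqrt 2)" using s10b s2b by linarith
  have L13: "X13 \<ge> (3338/10000) * a13" using mult_left_mono[OF g13 nn(2)] unfolding X13_def by linarith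
  have g14: "(12946/10000) \<le> (sqrt 17 - 2 * sqrt 2)" using s17b s2b by linarith
  have L14: "X14 \<ge> (12946/10000) * a14" using mult_left_mono[OF g14 nn(3)] unfolding X14_def by linarith
  have g23: "(7771/10000) \<le> (sqrt 13 - 2 * sqrt 2)" using s13b s2b by linarith
  have L23: "X23 \<ge> (7771/10000) * a23" using mult_left_mono[OF g23 nn(5)] unfolding X23_def by linarith
  have g24: "(16436/10000) \<le> (2 * sqrt 5 - 2 * sqrt 2)" using s5b s2b by linarith
  have L24: "X24 \<ge> (16436/10000) * a24" using mult_left_mono[OF g24 nn(6)] unfolding X24_def by linarith
  have g33: "(14142/10000) \<le> sqrt 2" using s2b by linarith
  have L33: "X33 \<ge> (14142/10000) * a33" using mult_left_mono[OF g33 nn(7)] unfolding X33_def by linarith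
  have g34: "(21715/10000) \<le> (5 - 2 * sqrt 2)" using s2b by linarith
  have L34: "X34 \<ge> (21715/10000) * a34" using mult_left_mono[OF g34 nn(8)] unfolding X34_def by linarith
  have g44: "(28284/10000) \<le> (2 * sqrt 2)" using s2b by linarith
  have L44: "X44 \<ge> (28284/10000) * a44" using mult_left_mono[OF g44 nn(9)] unfolding X44_def by linarith
  have N1eq: "N1 = N3 + 2 * N4 - 2" using T Nn H1 H2 H3 H4 a11 by linarith
  have b33: "me E 3 3 \<le> nv V E 3 choose 2" and b44: "me E 4 4 \<le> nv V E 4 choose 2"
    using profile(6)[OF cb n6] by auto
  have main: "X12 + X13 + X14 + X23 + X24 + X33 + X34 + X44 > (59817/10000)"
  proof -
    consider "nv V E 4 \<ge> 2" | "nv V E 4 = 1" "nv V E 3 \<ge> 1" | "nv V E 4 = 1" "nv V E 3 = 0"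
      | "nv V E 4 = 0" "nv V E 3 \<ge> 4" | "nv V E 4 = 0" "nv V E 3 = 3"
      | "nv V E 4 = 0" "nv V E 3 = 2" | "nv V E 4 = 0" "nv V E 3 \<le> 1" by linarith
    thus ?thesis
    proof cases
      case 1
      hence "N4 \<ge> 2" by (simp add: N4_def)
      thus ?thesis using nn a11 T Nn H1 H2 H3 H4 N1eq L12 L13 L14 L23 L24 L33 L34 L44 by linarith
    next
      case 2
      hence "N4 = 1" "N3 \<ge> 1" by (simp_all add: N4_def N3_def)
      thus ?thesis using nn a11 T Nn H1 H2 H3 H4 N1eq L12 L13 L14 L23 L24 L33 L34 L44 by linarith
    next
      case 3
      hence "N4 = 1" "N3 = 0" "a44 = 0" using b44 by (simp_all add: N4_def N3_def a44_def numeral_2_eq_2)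
      thus ?thesis using nn a11 T Nn H1 H2 H3 H4 N1eq L12 L13 L14 L23 L24 L33 L34 L44 by linarith
    next
      case 4
      hence "N4 = 0" "N3 \<ge> 4" by (simp_all add: N4_def N3_def)
      thus ?thesis using nn a11 T Nn H1 H2 H3 H4 N1eq L12 L13 L14 L23 L24 L33 L34 L44 by linarith
    next
      case 5
      hence n34: "N4 = 0" "N3 = 3" by (simp_all add: N4_def N3_def)
      have "me E 3 3 \<le> 3" using b33 5 by (simp add: numeral_eq_Suc)
      hence "me E 3 3 \<le> 2 \<or> me E 3 3 = 3" by linarith
      thus ?thesis
      proof
        assume "me E 3 3 \<le> 2"
        hence "a33 \<le> 2" by (simp add: a33_def)
        thus ?thesis using n34 nn a11 T Nn H1 H2 H3 H4 N1eq L12 L13 L14 L23 L24 L33 L34 L44 by linarith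
      next
        assume m33: "me E 3 3 = 3"
        show ?thesis
        proof (cases "me E 1 3 \<ge> 1")
          case True
          hence "a33 = 3" "a13 \<ge> 1" using m33 by (simp_all add: a33_def a13_def)
          thus ?thesis using n34 nn a11 T Nn H1 H2 H3 H4 N1eq L12 L13 L14 L23 L24 L33 L34 L44 by linarith
        next
          case False
          hence r: "a33 = 3" "a13 = 0" using m33 by (simp_all add: a33_def a13_def)
          have z: "a14 = 0" "a24 = 0" "a34 = 0" "a44 = 0" "N1 = 1" "a12 = 1" "a23 = 3"
            using r n34 nn a11 H1 H3 H4 N1eq by linarith+
          have "a22 = real n - 6" using z r T a11 by linarith
          hence m22: "me E 2 2 = n - 6" using n6 by (intro natr) (simp_all add: a22_def)
          have "N2 = real n - 4" using z r n34 Nn by linarith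
          hence n2: "nv V E 2 = n - 4" using n6 by (intro natr) (simp_all add: N2_def)
          have "beta9 n V E" unfolding beta9_def
            using cb 5 n2 z r m22 m33 False
            by (auto intro!: mprof_intro simp: P10_def defs profile(5)[OF cb n6] m11s)
          thus ?thesis using nb9 by simp
        qed
      qed
    next
      case 6
      hence n34: "N4 = 0" "N3 = 2" by (simp_all add: N4_def N3_def)
      have "me E 3 3 \<le> 1" using b33 6 by simp
      hence c: "me E 3 3 = 0 \<or> me E 3 3 = 1" by linarith
      have z: "a14 = 0" "a24 = 0" "a34 = 0" "a44 = 0" "N1 = 0" "a12 = 0" "a13 = 0"
        using n34 nn a11 H1 H3 H4 N1eq by linarith+
      have "N2 = real n - 2" using z n34 Nn by linarith
      hence n2: "nv V E 2 = n - 2" using n6 by (intro natr) (simp_all add: N2_def)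
      from c show ?thesis
      proof
        assume m33: "me E 3 3 = 0"
        hence "a23 = 6" using z n34 H3 by (simp add: a33_def)
        moreover have "a22 = real n - 5" using z T a11 m33 calculation by (simp add: a33_def) 
        hence m22: "me E 2 2 = n - 5" using n6 by (intro natr) (simp_all add: a22_def)
        ultimately have "beta3 n V E" unfolding beta3_def
          using cb 6 n2 z m22 m33
          by (auto intro!: mprof_intro simp: P10_def defs profile(5)[OF cb n6] m11s)
        thus ?thesis using nb3 by simp
      next
        assume m33: "me E 3 3 = 1"
        hence "a23 = 4" using z n34 H3 by (simp add: a33_def)
        moreover have "a22 = real n - 4" using z T a11 m33 calculation by (simp add: a33_def) 
        hence m22: "me E 2 2 = n - 4" using n6 by (intro natr) (simp_all add: a22_def)
        ultimately have "beta2 n V E" unfolding beta2_def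
          using cb 6 n2 z m22 m33
          by (auto intro!: mprof_intro simp: P10_def defs profile(5)[OF cb n6] m11s)
        thus ?thesis using nb2 by simp
      qed
    next
      case 7
      hence "N4 = 0" "N3 \<le> 1" by (simp_all add: N4_def N3_def)
      thus ?thesis using nn N1eq by linarith
    qed
  qed
  show ?thesis using key goal_red ub main by linarith
qed


theorem theorem3p9:
  fixes n :: nat
    and V1 V2 V3 V :: "'a set" and E1 E2 E3 E :: "'a set set"
  assumes "n \<ge> 6"
    and "beta2 n V1 E1" and "beta3 n V2 E2" and "beta9 n V3 E3"
    and "chemical_bicyclic n V E"
    and "\<not> beta2 n V E" and "\<not> beta3 n V E" and "\<not> beta9 n V E"
  shows "sombor E1 < sombor E2 \<and> sombor E2 < sombor E3 \<and> sombor E3 < sombor E"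
proof -
  have d1: "sombor E2 - sombor E1 = 2 * sqrt 13 - 5 * sqrt 2"
    by (simp add: beta2_SO[OF assms(2,1)] beta3_SO[OF assms(3,1)] algebra_simps)
  have d2: "sombor E3 - sombor E2 = sqrt 5 - 3 * sqrt 13 + 7 * sqrt 2"
    by (simp add: beta9_SO[OF assms(4,1)] beta3_SO[OF assms(3,1)] algebra_simps)
  have "sombor E3 < sombor E"
    using lower[OF assms(5,1,6,7,8)] beta9_SO[OF assms(4,1)] by simp
  moreover have "sombor E1 < sombor E2" using d1 s2b s13b by linarith
  moreover have "sombor E2 < sombor E3" using d2 s2b s13b s5b by linarith
  ultimately show ?thesis by simp
qed

end
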